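(* Let $G$ be a graph with vertices labelled $1,\dots,n$, let $A$ be a normal subgroup of $\mathbb{Z}_2^{*V(G)}$ that is $\mathrm{End}\,G$-invariant (i.e. $\phi(A)\subset A$ for every graph homomorphism $\phi\colon G\to G$), and let $\Gamma=\mathbb{Z}_2^{*V(G)}/A$. Then there exists a group-theoretical graph category $\mathscr{C}$ such that $\mathscr{C}^G$ is the representation category of the quantum group $\mathbb{G}=\hat\Gamma\rtimes\mathrm{Aut}\,G$, i.e. $\mathscr{C}^G(k,l)=\mathrm{Mor}(u^{\otimes k},u^{\otimes l})$ for all $k,l\in\mathbb{N}_0$, where $u$ is the fundamental representation of $\mathbb{G}$.
   Context: Graphs are finite, undirected, without multiple edges, loops allowed, up to isomorphism; $N_k$ is the edgeless graph on $k$ vertices; graph homomorphisms map edges (including loops) to edges, and a vertex map $\phi$ induces a homomorphism of the groups $\mathbb{Z}_2^{*V}$ (generated by $V$ subject to $v^2=e$), also denoted $\phi$. A bilabelled graph is $(K,\mathbf{a},\mathbf{b})$ with $\mathbf{a}\in V(K)^k$, $\mathbf{b}\in V(K)^l$, up to isomorphism preserving tuples; $\mathscr{C}(k,l)$ those with $k$ inputs, $l$ outputs. Operations: tensor product $(K,\mathbf{a},\mathbf{b})\otimes(H,\mathbf{c},\mathbf{d})=(K\sqcup H,\mathbf{a}\mathbf{c},\mathbf{b}\mathbf{d})$; composition (for $|\mathbf{b}|=|\mathbf{c}|$) $(H,\mathbf{c},\mathbf{d})\cdot(K,\mathbf{a},\mathbf{b})=(H\cdot K,\mathbf{a},\mathbf{d})$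 with $H\cdot K$ the quotient of $K\sqcup H$ identifying $b_i$ with $c_i$ (edges between quotient vertices iff between some representatives); involution swaps the tuples. For a partition $\pi$ of $V(K)$, $K/\pi$ has the blocks as vertices with an edge between two (possibly equal) blocks iff $K$ has one between some of their elements, and $(K,\mathbf{a},\mathbf{b})/\pi=(K/\pi,q_\pi(\mathbf{a}),q_\pi(\mathbf{b}))$ with $q_\pi$ the quotient map. A graph category is a set of bilabelled graphs containing $(N_0,\emptyset,\emptyset)$, $(M,(v),(v))$, $(M,\emptyset,(v,v))$ ($M$ the one-vertex loopless graph with vertex $v$) and closed under tensor products, compositions and involution; it is group-theoretical if also closed under all quotients $\mathbf{K}\mapsto\mathbf{K}/\pi$. $\hat T^G_{(K,\mathbf{a},\mathbf{b})}\colon(\mathbb{C}^n)^{\otimes k}\to(\mathbb{C}^n)^{\otimes l}$ has $(\mathbf{j},\mathbf{i})$-entry $\#\{\phi\colon K\to G\text{ injective homomorphism}\mid\phi(\mathbf{a})=\mathbf{i},\phi(\mathbf{b})=\mathbf{j}\}$ and $\mathscr{C}^G(k,l)=\mathrm{span}\{\hat T^G_{\mathbf{K}}\mid\mathbf{K}\in\mathscr{C}(k,l)\}$. Quantum groups: for an orthogonal compact matrix quantum group $(O(\mathbb{G}),u)$, $\mathrm{Mor}(u^{\otimes k},u^{\otimes l})=\{T\mid Tu^{\otimes k}=u^{\otimes l}T\}$. A permutation group $H\subset S_n$ is $(O(H),v)$ with $v_{ij}(\sigma)=\delta_{i\sigma(j)}$; $\mathrm{Aut}\,G\subset S_n$ via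 the labelling. For $\Gamma$ a quotient of $\mathbb{Z}_2^{*n}$ by an $H$-invariant normal subgroup, with $\gamma_i\in\mathbb{C}\Gamma$ the images of the generators, $\hat\Gamma\rtimes H$ is $(\mathbb{C}\Gamma\otimes O(H),u)$ with $u_{ij}=\gamma_i\otimes v_{ij}$. *)

theory Defs
  imports Complex_Main "HOL-Algebra.Coset" "HOL-Combinatorics.Permutations"
    "HOL-Library.Disjoint_Sets" "HOL-Library.FuncSet"
begin

text \<open>Isomorphism classes are represented by
 sets of concrete representatives closed under isomorphism.\<close>

record bgraph =
  bV :: "nat set"
  bE :: "(nat \<times> nat) set"
  bin :: "nat list"
  bout :: "nat list"

definition wf_bg :: "bgraph \<Rightarrow> bool" where
  "wf_bg K \<longleftrightarrow> finite (bV K) \<and> bE K \<subseteq> bV K \<times> bV K \<and> sym (bE K)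
     \<and> set (bin K) \<subseteq> bV K \<and> set (bout K) \<subseteq> bV K"

definition bg_iso :: "bgraph \<Rightarrow> bgraph \<Rightarrow> bool" where
  "bg_iso K K' \<longleftrightarrow> (\<exists>f. bij_betw f (bV K) (bV K')
     \<and> (\<forall>x\<in>bV K. \<forall>y\<in>bV K. (x, y) \<in> bE K \<longleftrightarrow> (f x, f y) \<in> bE K')
     \<and> map f (bin K) = bin K' \<and> map f (bout K) = bout K')"

definition tensor :: "bgraph \<Rightarrow> bgraph \<Rightarrow> bgraph" where
  "tensor K H = \<lparr> bV = (\<lambda>x. 2*x) ` bV K \<union> (\<lambda>x. 2*x+1) ` bV H,
     bE = (\<lambda>(x,y). (2*x, 2*y)) ` bE K \<union> (\<lambda>(x,y). (2*x+1, 2*y+1)) ` bE H,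
     bin = map (\<lambda>x. 2*x) (bin K) @ map (\<lambda>x. 2*x+1) (bin H),
     bout = map (\<lambda>x. 2*x) (bout K) @ map (\<lambda>x. 2*x+1) (bout H) \<rparr>"

definition qblock :: "nat set set \<Rightarrow> nat \<Rightarrow> nat set" where
  "qblock P x = (THE B. B \<in> P \<and> x \<in> B)"

definition qmap :: "nat set set \<Rightarrow> nat \<Rightarrow> nat" where
  "qmap P x = Min (qblock P x)"

definition bg_quot :: "bgraph \<Rightarrow> nat set set \<Rightarrow> bgraph" where
  "bg_quot K P = \<lparr> bV = qmap P ` bV K,
     bE = (\<lambda>(x,y). (qmap P x, qmap P y)) ` bE K,
     bin = map (qmap P) (bin K), bout = map (qmap P) (bout K) \<rparr>"

text \<open>Composition H cdot K (requires length (bout K) = length (bin H)):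
 quotient of the disjoint union of K and H identifying the i-th output of K with the
 i-th input of H; inputs are those of K, outputs those of H.\<close>
definition compose :: "bgraph \<Rightarrow> bgraph \<Rightarrow> bgraph" where
  "compose H K = (let D = tensor K H;
       S = {(2 * (bout K ! i), 2 * (bin H ! i) + 1) | i. i < length (bout K)};
       R = (S \<union> S\<inverse>)\<^sup>* \<inter> (bV D \<times> bV D)
     in bg_quot (D\<lparr> bin := map (\<lambda>x. 2*x) (bin K), bout := map (\<lambda>x. 2*x+1) (bout H) \<rparr>)
                (bV D // R))"

definition involution :: "bgraph \<Rightarrow> bgraph" where
  "involution K = K\<lparr> bin := bout K, bout := bin K \<rparr>"

definition N0 :: bgraph where
  "N0 = \<lparr> bV = {}, bE = {}, bin = [], bout = [] \<rparr>"

definition Mid :: bgraph where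
  "Mid = \<lparr> bV = {0}, bE = {}, bin = [0], bout = [0] \<rparr>"

definition Mpair :: bgraph where
  "Mpair = \<lparr> bV = {0}, bE = {}, bin = [], bout = [0, 0] \<rparr>"

definition graph_category :: "bgraph set \<Rightarrow> bool" where
  "graph_category C \<longleftrightarrow>
     (\<forall>K\<in>C. wf_bg K)
   \<and> (\<forall>K\<in>C. \<forall>K'. wf_bg K' \<and> bg_iso K K' \<longrightarrow> K' \<in> C)
   \<and> N0 \<in> C \<and> Mid \<in> C \<and> Mpair \<in> C
   \<and> (\<forall>K\<in>C. \<forall>H\<in>C. tensor K H \<in> C)
   \<and> (\<forall>K\<in>C. \<forall>H\<in>C. length (bout K) = length (bin H) \<longrightarrow> compose H K \<in> C)
   \<and> (\<forall>K\<in>C. involution K \<in> C)"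

definition group_theoretical :: "bgraph set \<Rightarrow> bool" where
  "group_theoretical C \<longleftrightarrow> graph_category C
     \<and> (\<forall>K\<in>C. \<forall>P. partition_on (bV K) P \<longrightarrow> bg_quot K P \<in> C)"

text \<open>The graph G has vertex set {0..<n} (labels 1..n shifted to 0..n-1) and edge
 relation EG. A matrix T : maps between tensor powers is a function T j i with
 j in idx n l, i in idx n k, and value 0 elsewhere.\<close>

definition idx :: "nat \<Rightarrow> nat \<Rightarrow> nat list set" where
  "idx n k = {xs. length xs = k \<and> set xs \<subseteq> {0..<n}}"

definition hatT :: "nat \<Rightarrow> (nat \<times> nat) set \<Rightarrow> bgraph \<Rightarrow> nat list \<Rightarrow> nat list \<Rightarrow> complex" where
  "hatT n EG K j i = of_nat (card {\<phi> \<in> bV K \<rightarrow>\<^sub>E {0..<n}. inj_on \<phi> (bV K)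
      \<and> (\<forall>(x,y)\<in>bE K. (\<phi> x, \<phi> y) \<in> EG)
      \<and> map \<phi> (bin K) = i \<and> map \<phi> (bout K) = j})"

definition lin_span :: "(nat list \<Rightarrow> nat list \<Rightarrow> complex) set \<Rightarrow> (nat list \<Rightarrow> nat list \<Rightarrow> complex) set" where
  "lin_span S = {T. \<exists>F c. finite F \<and> F \<subseteq> S \<and> T = (\<lambda>j i. \<Sum>X\<in>F. c X * X j i)}"

definition CG :: "nat \<Rightarrow> (nat \<times> nat) set \<Rightarrow> bgraph set \<Rightarrow> nat \<Rightarrow> nat \<Rightarrow> (nat list \<Rightarrow> nat list \<Rightarrow> complex) set" where
  "CG n EG C k l = lin_span {hatT n EG K | K. K \<in> C \<and> length (bin K) = k \<and> length (bout K) = l}"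

definition reduced :: "nat list \<Rightarrow> bool" where
  "reduced w \<longleftrightarrow> (\<forall>i. Suc i < length w \<longrightarrow> w ! i \<noteq> w ! Suc i)"

definition red_push :: "nat \<Rightarrow> nat list \<Rightarrow> nat list" where
  "red_push x ys = (case ys of [] \<Rightarrow> [x] | y # ys' \<Rightarrow> (if x = y then ys' else x # ys))"

definition red :: "nat list \<Rightarrow> nat list" where
  "red w = foldr red_push w []"

definition Z2free :: "nat \<Rightarrow> nat list monoid" where
  "Z2free n = \<lparr> carrier = {w. set w \<subseteq> {0..<n} \<and> reduced w},
               monoid.mult = (\<lambda>v w. red (v @ w)), one = [] \<rparr>"

definition End_invariant :: "nat \<Rightarrow> (nat \<times> nat) set \<Rightarrow> nat list set \<Rightarrow> bool" where
  "End_invariant n EG A \<longleftrightarrow> (\<forall>\<phi>. (\<forall>x<n. \<phi> x < n) \<and> (\<forall>(x,y)\<in>EG. (\<phi> x, \<phi> y) \<in> EG)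
      \<longrightarrow> (\<forall>w\<in>A. red (map \<phi> w) \<in> A))"

definition Gam :: "nat \<Rightarrow> nat list set \<Rightarrow> nat list set monoid" where
  "Gam n A = Z2free n Mod A"

definition gam :: "nat \<Rightarrow> nat list set \<Rightarrow> nat \<Rightarrow> nat list set" where
  "gam n A i = A #>\<^bsub>Z2free n\<^esub> [i]"

definition Aut :: "nat \<Rightarrow> (nat \<times> nat) set \<Rightarrow> (nat \<Rightarrow> nat) set" where
  "Aut n EG = {\<sigma>. \<sigma> permutes {0..<n} \<and> (\<forall>x<n. \<forall>y<n. (x,y) \<in> EG \<longleftrightarrow> (\<sigma> x, \<sigma> y) \<in> EG)}"

section \<open>The algebra C Gamma tensor O(Aut G), realised as functions from Aut G to C Gamma\<close>

text \<open>An element x is given by coefficients x sigma g (sigma in Aut G, g in Gamma), finitely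
 supported in g. The product is pointwise in sigma and convolution in g.\<close>

type_synonym alg = "(nat \<Rightarrow> nat) \<Rightarrow> nat list set \<Rightarrow> complex"

definition amult :: "nat list set monoid \<Rightarrow> alg \<Rightarrow> alg \<Rightarrow> alg" where
  "amult \<Gamma> x y = (\<lambda>\<sigma> g. \<Sum>(h1,h2) \<in> {(h1,h2). h1 \<in> carrier \<Gamma> \<and> h2 \<in> carrier \<Gamma>
       \<and> x \<sigma> h1 \<noteq> 0 \<and> y \<sigma> h2 \<noteq> 0 \<and> h1 \<otimes>\<^bsub>\<Gamma>\<^esub> h2 = g}. x \<sigma> h1 * y \<sigma> h2)"

definition aone :: "nat list set monoid \<Rightarrow> alg" where
  "aone \<Gamma> = (\<lambda>\<sigma> g. if g = \<one>\<^bsub>\<Gamma>\<^esub> then 1 else 0)"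

text \<open>u_{ij} = gamma_i otimes v_{ij}, with v_{ij}(sigma) = delta_{i,sigma(j)}.\<close>
definition ufund :: "nat \<Rightarrow> nat list set \<Rightarrow> nat \<Rightarrow> nat \<Rightarrow> alg" where
  "ufund n A i j = (\<lambda>\<sigma> g. if g = gam n A i \<and> i = \<sigma> j then 1 else 0)"

definition utens :: "nat \<Rightarrow> nat list set \<Rightarrow> nat list \<Rightarrow> nat list \<Rightarrow> alg" where
  "utens n A p i = foldr (\<lambda>(a,b) acc. amult (Gam n A) (ufund n A a b) acc) (zip p i) (aone (Gam n A))"

text \<open>Mor(u^{otimesk}, u^{otimesl}) = {T | T u^{otimesk} = u^{otimesl} T}.\<close>
definition Mor :: "nat \<Rightarrow> (nat \<times> nat) set \<Rightarrow> nat list set \<Rightarrow> nat \<Rightarrow> nat \<Rightarrow> (nat list \<Rightarrow> nat list \<Rightarrow> complex) set" where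
  "Mor n EG A k l = {T. (\<forall>j i. \<not> (j \<in> idx n l \<and> i \<in> idx n k) \<longrightarrow> T j i = 0)
     \<and> (\<forall>j\<in>idx n l. \<forall>i\<in>idx n k. \<forall>\<sigma>\<in>Aut n EG. \<forall>g\<in>carrier (Gam n A).
          (\<Sum>p\<in>idx n k. T j p * utens n A p i \<sigma> g)
        = (\<Sum>q\<in>idx n l. utens n A j q \<sigma> g * T q i))}"

end

theory Submission
  imports Defs
begin


lemma reduced_Cons: "reduced (x # w) \<longleftrightarrow> reduced w \<and> (w = [] \<or> hd w \<noteq> x)"
  unfolding reduced_def
  apply (cases w)
   apply simp
  apply (auto simp: nth_Cons split: nat.splits)
  done

lemma reduced_Nil[simp]: "reduced []" by (simp add: reduced_def)

lemma red_push_reduced: "reduced w \<Longrightarrow> reduced (red_push x w)"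
  by (cases w) (auto simp: red_push_def reduced_Cons)

lemma red_Nil[simp]: "red [] = []" by (simp add: red_def)
lemma red_Cons: "red (x # w) = red_push x (red w)" by (simp add: red_def)

lemma red_reduced: "reduced (red w)"
  by (induction w) (auto simp: red_Cons red_push_reduced)

lemma set_red_push: "set (red_push x w) \<subseteq> insert x (set w)"
  by (cases w) (auto simp: red_push_def)

lemma set_red: "set (red w) \<subseteq> set w"
  apply (induction w)
   apply (simp)
  using set_red_push by (fastforce simp: red_Cons)

lemma red_id: "reduced w \<Longrightarrow> red w = w"
  apply (induction w)
   apply simp
  apply (auto simp: red_Cons reduced_Cons red_push_def split: list.splits)
  done

lemma red_red[simp]: "red (red w) = red w"
  by (simp add: red_id red_reduced)

lemma red_push_twice: "reduced z \<Longrightarrow> red_push x (red_push x z) = z"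
  by (cases z) (auto simp: red_push_def reduced_Cons split: list.splits)

lemma red_append: "red (v @ w) = foldr red_push v (red w)"
  by (simp add: red_def)

lemma foldr_red_push_step:
  assumes "reduced r" "reduced u"
  shows "foldr red_push (red_push x r) u = red_push x (foldr red_push r u)"
proof (cases r)
  case Nil then show ?thesis by (simp add: red_push_def)
next
  case (Cons y r')
  have ru: "reduced (foldr red_push r' u)"
    using assms(2) by (induction r') (auto simp: red_push_reduced)
  show ?thesis
  proof (cases "x = y")
    case True
    then show ?thesis using Cons red_push_twice[OF ru, of x] by (simp add: red_push_def)
  next
    case False
    then show ?thesis using Cons by (simp add: red_push_def)
  qed
qed

lemma foldr_red: "reduced u \<Longrightarrow> foldr red_push (red v) u = foldr red_push v u"
proof (induction v)
  case Nil then show ?case by simp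
next
  case (Cons x v)
  have "foldr red_push (red (x # v)) u = foldr red_push (red_push x (red v)) u"
    by (simp add: red_Cons)
  also have "\<dots> = red_push x (foldr red_push (red v) u)"
    by (rule foldr_red_push_step[OF red_reduced Cons.prems])
  finally show ?case using Cons by simp
qed

lemma red_append_red: "red (red v @ red w) = red (v @ w)"
  by (simp add: red_append foldr_red red_reduced)

lemma red_map_step:
  assumes "reduced r"
  shows "red (map f (red_push x r)) = red_push (f x) (red (map f r))"
proof (cases r)
  case Nil then show ?thesis by (simp add: red_push_def red_Cons)
next
  case (Cons y r')
  show ?thesis
  proof (cases "x = y")
    case True
    then show ?thesis using Cons red_push_twice[OF red_reduced, of "f x" "map f r'"]
      by (simp add: red_push_def red_Cons)
  next
    case False
    then show ?thesis using Cons by (simp add: red_push_def red_Cons)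
  qed
qed

lemma red_map_red: "red (map f (red u)) = red (map f u)"
proof (induction u)
  case Nil then show ?case by simp
next
  case (Cons x u)
  have "red (map f (red (x # u))) = red (map f (red_push x (red u)))" by (simp add: red_Cons)
  also have "\<dots> = red_push (f x) (red (map f (red u)))" by (rule red_map_step[OF red_reduced])
  finally show ?case using Cons by (simp add: red_Cons)
qed

lemma red_cancel: "red (w @ rev w) = []"
proof (induction w)
  case Nil then show ?case by simp
next
  case (Cons x w)
  have "red (w @ rev w @ [x]) = red (red (w @ rev w) @ red [x])"
    using red_append_red[of "w @ rev w" "[x]"] by simp
  also have "\<dots> = [x]" using Cons by (simp add: red_Cons red_push_def)
  finally show ?case by (simp add: red_Cons red_push_def)
qed

lemma red_cancel': "red (rev w @ w) = []"
  using red_cancel[of "rev w"] by simp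



definition gm :: "nat \<Rightarrow> nat list set \<Rightarrow> nat list \<Rightarrow> nat list set" where
  "gm n A w = A #>\<^bsub>Z2free n\<^esub> red w"

lemma red_carrier: "set w \<subseteq> {0..<n} \<Longrightarrow> red w \<in> carrier (Z2free n)"
  using set_red[of w] red_reduced[of w] by (auto simp: Z2free_def)

lemma Z2_mult: "x \<otimes>\<^bsub>Z2free n\<^esub> y = red (x @ y)" by (simp add: Z2free_def)
lemma Z2_one: "\<one>\<^bsub>Z2free n\<^esub> = []" by (simp add: Z2free_def)

lemma gm_append:
  assumes N: "normal A (Z2free n)" and "set u \<subseteq> {0..<n}" "set v \<subseteq> {0..<n}"
  shows "gm n A (u @ v) = gm n A u <#>\<^bsub>Z2free n\<^esub> gm n A v"
proof -
  interpret normal A "Z2free n" by (rule N)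
  show ?thesis unfolding gm_def
    by (simp add: rcos_sum red_carrier assms Z2_mult red_append_red)
qed

lemma gm_carrier:
  assumes N: "normal A (Z2free n)" and "set u \<subseteq> {0..<n}"
  shows "gm n A u \<in> carrier (Gam n A)"
proof -
  interpret normal A "Z2free n" by (rule N)
  show ?thesis unfolding gm_def Gam_def FactGroup_def
    using rcosetsI[OF subset red_carrier[OF assms(2)]] by simp
qed

lemma Gam_mult: "x \<otimes>\<^bsub>Gam n A\<^esub> y = x <#>\<^bsub>Z2free n\<^esub> y"
  by (simp add: Gam_def FactGroup_def)

lemma Gam_one: "\<one>\<^bsub>Gam n A\<^esub> = A"
  by (simp add: Gam_def FactGroup_def)

lemma gm_Nil:
  assumes N: "normal A (Z2free n)"
  shows "gm n A [] = A"
proof -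
  interpret normal A "Z2free n" by (rule N)
  show ?thesis unfolding gm_def using coset_mult_one[OF subset] by (simp add: Z2_one)
qed

lemma gam_gm: "a < n \<Longrightarrow> gam n A a = gm n A [a]"
  by (simp add: gam_def gm_def red_Cons red_push_def)

lemma gm_pair: "gm n A [a, a] = gm n A []"
  by (simp add: gm_def red_Cons red_push_def)

lemma inv_red:
  assumes N: "normal A (Z2free n)" and "set j \<subseteq> {0..<n}"
  shows "inv\<^bsub>Z2free n\<^esub> (red j) = red (rev j)"
proof -
  interpret normal A "Z2free n" by (rule N)
  have "red (rev j) \<otimes>\<^bsub>Z2free n\<^esub> red j = \<one>\<^bsub>Z2free n\<^esub>"
    by (simp add: Z2_mult Z2_one red_append_red red_cancel')
  then show ?thesis
    using inv_equality red_carrier assms(2) by (simp add: subset_eq)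
qed

lemma gm_eq_iff:
  assumes N: "normal A (Z2free n)" and "set i \<subseteq> {0..<n}" "set j \<subseteq> {0..<n}"
  shows "gm n A i = gm n A j \<longleftrightarrow> red (i @ rev j) \<in> A"
proof -
  interpret normal A "Z2free n" by (rule N)
  have ci: "red i \<in> carrier (Z2free n)" and cj: "red j \<in> carrier (Z2free n)"
    using red_carrier assms by auto
  have e: "red i \<otimes>\<^bsub>Z2free n\<^esub> inv\<^bsub>Z2free n\<^esub> (red j) = red (i @ rev j)"
    using inv_red[OF N assms(3)] by (simp add: Z2_mult red_append_red)
  have "gm n A i = gm n A j \<longleftrightarrow> red i \<in> A #>\<^bsub>Z2free n\<^esub> red j"
    unfolding gm_def
    using repr_independence[OF _ cj is_subgroup] repr_independenceD[OF is_subgroup ci]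
    by metis
  also have "\<dots> \<longleftrightarrow> red (i @ rev j) \<in> A"
    using rcos_module[OF is_group cj ci] e by simp
  finally show ?thesis .
qed

lemma gm_map:
  assumes N: "normal A (Z2free n)" and E: "End_invariant n EG A"
    and f: "\<forall>x<n. f x < n" "\<forall>(x,y)\<in>EG. (f x, f y) \<in> EG"
    and i: "set i \<subseteq> {0..<n}" and j: "set j \<subseteq> {0..<n}"
    and eq: "gm n A i = gm n A j"
  shows "gm n A (map f i) = gm n A (map f j)"
proof -
  have "red (i @ rev j) \<in> A" using gm_eq_iff[OF N i j] eq by simp
  then have "red (map f (red (i @ rev j))) \<in> A" using E f unfolding End_invariant_def by blast
  then have "red (map f i @ rev (map f j)) \<in> A" by (simp add: red_map_red rev_map)
  moreover have "set (map f i) \<subseteq> {0..<n}" "set (map f j) \<subseteq> {0..<n}" using f i j by auto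
  ultimately show ?thesis using gm_eq_iff[OF N] by blast
qed



lemma utens_eq:
  assumes N: "normal A (Z2free n)"
  shows "length p = length i \<Longrightarrow> set p \<subseteq> {0..<n} \<Longrightarrow>
    utens n A p i \<sigma> g = (if g = gm n A p \<and> p = map \<sigma> i then 1 else 0)"
proof (induction p i arbitrary: g rule: list_induct2)
  case Nil
  then show ?case by (simp add: utens_def aone_def Gam_one gm_Nil[OF N])
next
  case (Cons a p b i)
  have IH: "\<And>g. utens n A p i \<sigma> g = (if g = gm n A p \<and> p = map \<sigma> i then 1 else 0)"
    using Cons by simp
  have an: "a < n" and pn: "set p \<subseteq> {0..<n}" using Cons.prems by auto
  have rec: "utens n A (a # p) (b # i) = amult (Gam n A) (ufund n A a b) (utens n A p i)"
    by (simp add: utens_def)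
  define S where "S = {(h1,h2). h1 \<in> carrier (Gam n A) \<and> h2 \<in> carrier (Gam n A)
       \<and> ufund n A a b \<sigma> h1 \<noteq> 0 \<and> utens n A p i \<sigma> h2 \<noteq> 0 \<and> h1 \<otimes>\<^bsub>Gam n A\<^esub> h2 = g}"
  have prod: "gm n A [a] \<otimes>\<^bsub>Gam n A\<^esub> gm n A p = gm n A (a # p)"
    using gm_append[OF N, of "[a]" p] an pn by (simp add: Gam_mult)
  have S: "S = (if g = gm n A (a # p) \<and> a # p = map \<sigma> (b # i) then {(gm n A [a], gm n A p)} else {})"
    unfolding S_def IH ufund_def gam_gm[OF an]
    using gm_carrier[OF N, of "[a]"] gm_carrier[OF N pn] an prod
    by auto
  have "utens n A (a # p) (b # i) \<sigma> g = (\<Sum>(h1,h2)\<in>S. ufund n A a b \<sigma> h1 * utens n A p i \<sigma> h2)"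
    unfolding rec amult_def S_def by simp
  also have "\<dots> = (if g = gm n A (a # p) \<and> a # p = map \<sigma> (b # i) then 1 else 0)"
    unfolding S by (simp add: IH ufund_def gam_gm[OF an])
  finally show ?case .
qed



lemma aut_perm: "\<sigma> \<in> Aut n EG \<Longrightarrow> \<sigma> permutes {0..<n}" by (simp add: Aut_def)

lemma aut_lt: "\<sigma> \<in> Aut n EG \<Longrightarrow> x < n \<Longrightarrow> \<sigma> x < n"
  using permutes_in_image[OF aut_perm] by fastforce

lemma aut_lt_iff: "\<sigma> \<in> Aut n EG \<Longrightarrow> \<sigma> x < n \<longleftrightarrow> x < n"
  using permutes_in_image[OF aut_perm] by fastforce

lemma aut_edge: "EG \<subseteq> {0..<n} \<times> {0..<n} \<Longrightarrow> \<sigma> \<in> Aut n EG \<Longrightarrow> (x,y) \<in> EG \<Longrightarrow> (\<sigma> x, \<sigma> y) \<in> EG"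
  unfolding Aut_def by auto

lemma aut_hom: "EG \<subseteq> {0..<n} \<times> {0..<n} \<Longrightarrow> \<sigma> \<in> Aut n EG \<Longrightarrow>
   (\<forall>x<n. \<sigma> x < n) \<and> (\<forall>(x,y)\<in>EG. (\<sigma> x, \<sigma> y) \<in> EG)"
  using aut_lt aut_edge by blast

lemma inv_map1: "\<sigma> permutes S \<Longrightarrow> map (inv_into UNIV \<sigma>) (map \<sigma> i) = i"
  by (induction i) (auto simp: permutes_inverses)
lemma inv_map2: "\<sigma> permutes S \<Longrightarrow> map \<sigma> (map (inv_into UNIV \<sigma>) i) = i"
  by (induction i) (auto simp: permutes_inverses)

lemma aut_inv: assumes "\<sigma> \<in> Aut n EG" shows "inv_into UNIV \<sigma> \<in> Aut n EG"
proof -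
  have p: "\<sigma> permutes {0..<n}" using assms by (simp add: Aut_def)
  have ip: "inv_into UNIV \<sigma> permutes {0..<n}" using permutes_inv[OF p] .
  have "(x,y) \<in> EG \<longleftrightarrow> (inv_into UNIV \<sigma> x, inv_into UNIV \<sigma> y) \<in> EG" if "x<n" "y<n" for x y
  proof -
    have "inv_into UNIV \<sigma> x < n" "inv_into UNIV \<sigma> y < n" using permutes_in_image[OF ip] that by auto
    then have "(inv_into UNIV \<sigma> x, inv_into UNIV \<sigma> y) \<in> EG \<longleftrightarrow> (\<sigma> (inv_into UNIV \<sigma> x), \<sigma> (inv_into UNIV \<sigma> y)) \<in> EG"
      using assms by (simp add: Aut_def)
    then show ?thesis by (simp add: permutes_inverses[OF p])
  qed
  then show ?thesis using ip by (simp add: Aut_def)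
qed

lemma aut_id: "id \<in> Aut n EG" by (simp add: Aut_def permutes_id)

lemma idx_map: "\<sigma> \<in> Aut n EG \<Longrightarrow> map \<sigma> i \<in> idx n k \<longleftrightarrow> i \<in> idx n k"
  unfolding idx_def using aut_lt_iff[of \<sigma>] by auto

lemma finite_idx: "finite (idx n k)"
  unfolding idx_def using finite_lists_length_eq[of "{0..<n}" k] by (simp add: conj_commute)

lemma idx_set: "i \<in> idx n k \<Longrightarrow> set i \<subseteq> {0..<n}" by (simp add: idx_def)

lemma sumL:
  assumes N: "normal A (Z2free n)" and s: "\<sigma> \<in> Aut n EG" and i: "i \<in> idx n k"
  shows "(\<Sum>p\<in>idx n k. T j p * utens n A p i \<sigma> g) = (if g = gm n A (map \<sigma> i) then T j (map \<sigma> i) else 0)"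
proof -
  have "(\<Sum>p\<in>idx n k. T j p * utens n A p i \<sigma> g) =
        (\<Sum>p\<in>idx n k. if p = map \<sigma> i then (if g = gm n A p then T j p else 0) else 0)"
    apply (rule sum.cong, rule refl)
    subgoal for p using utens_eq[OF N, of p i \<sigma> g] i by (auto simp: idx_def)
    done
  also have "\<dots> = (if g = gm n A (map \<sigma> i) then T j (map \<sigma> i) else 0)"
    using finite_idx idx_map[OF s] i by (simp add: sum.delta')
  finally show ?thesis .
qed

lemma sumR:
  assumes N: "normal A (Z2free n)" and s: "\<sigma> \<in> Aut n EG" and j: "j \<in> idx n l"
  shows "(\<Sum>q\<in>idx n l. utens n A j q \<sigma> g * T q i) = (if g = gm n A j then T (map (inv_into UNIV \<sigma>) j) i else 0)"
proof -
  have p: "\<sigma> permutes {0..<n}" using s by (rule aut_perm)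
  have "(\<Sum>q\<in>idx n l. utens n A j q \<sigma> g * T q i) =
        (\<Sum>q\<in>idx n l. if q = map (inv_into UNIV \<sigma>) j then (if g = gm n A j then T q i else 0) else 0)"
    apply (rule sum.cong, rule refl)
    subgoal for q using utens_eq[OF N, of j q \<sigma> g] j inv_map1[OF p, of q] inv_map2[OF p, of j]
      by (auto simp: idx_def)
    done
  also have "\<dots> = (if g = gm n A j then T (map (inv_into UNIV \<sigma>) j) i else 0)"
    using finite_idx idx_map[OF aut_inv[OF s]] j by (simp add: sum.delta')
  finally show ?thesis .
qed

definition PT :: "nat \<Rightarrow> (nat \<times> nat) set \<Rightarrow> nat list set \<Rightarrow> nat \<Rightarrow> nat \<Rightarrow> (nat list \<Rightarrow> nat list \<Rightarrow> complex) \<Rightarrow> bool" where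
  "PT n EG A k l T \<longleftrightarrow> (\<forall>j i. \<not> (j \<in> idx n l \<and> i \<in> idx n k) \<longrightarrow> T j i = 0)
    \<and> (\<forall>\<sigma>\<in>Aut n EG. \<forall>j i. T (map \<sigma> j) (map \<sigma> i) = T j i)
    \<and> (\<forall>j\<in>idx n l. \<forall>i\<in>idx n k. T j i \<noteq> 0 \<longrightarrow> gm n A i = gm n A j)"

lemma Mor_char:
  assumes EG: "EG \<subseteq> {0..<n} \<times> {0..<n}" and N: "normal A (Z2free n)" and E: "End_invariant n EG A"
  shows "Mor n EG A k l = {T. PT n EG A k l T}"
proof -
  have gmaut: "gm n A (map \<sigma> i) = gm n A (map \<sigma> j)"
    if "\<sigma> \<in> Aut n EG" "i \<in> idx n k" "j \<in> idx n l" "gm n A i = gm n A j" for \<sigma> i j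
    using gm_map[OF N E _ _ idx_set[OF that(2)] idx_set[OF that(3)] that(4)] aut_hom[OF EG that(1)]
    by blast
  have eqv: "(\<forall>j\<in>idx n l. \<forall>i\<in>idx n k. \<forall>\<sigma>\<in>Aut n EG. \<forall>g\<in>carrier (Gam n A).
          (\<Sum>p\<in>idx n k. T j p * utens n A p i \<sigma> g) = (\<Sum>q\<in>idx n l. utens n A j q \<sigma> g * T q i))
      \<longleftrightarrow> (\<forall>j\<in>idx n l. \<forall>i\<in>idx n k. \<forall>\<sigma>\<in>Aut n EG. \<forall>g\<in>carrier (Gam n A).
          (if g = gm n A (map \<sigma> i) then T j (map \<sigma> i) else 0) = (if g = gm n A j then T (map (inv_into UNIV \<sigma>) j) i else 0))"
    for T
    apply (intro ball_cong refl)
    apply (simp only: sumL[OF N] sumR[OF N])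
    done
  show ?thesis
  proof (intro equalityI subsetI)
    fix T assume "T \<in> Mor n EG A k l"
    then have Z: "\<forall>j i. \<not> (j \<in> idx n l \<and> i \<in> idx n k) \<longrightarrow> T j i = 0"
      and C: "\<forall>j\<in>idx n l. \<forall>i\<in>idx n k. \<forall>\<sigma>\<in>Aut n EG. \<forall>g\<in>carrier (Gam n A).
          (if g = gm n A (map \<sigma> i) then T j (map \<sigma> i) else 0) = (if g = gm n A j then T (map (inv_into UNIV \<sigma>) j) i else 0)"
    proof -
      have "T \<in> {T. (\<forall>j i. \<not> (j \<in> idx n l \<and> i \<in> idx n k) \<longrightarrow> T j i = 0)
     \<and> (\<forall>j\<in>idx n l. \<forall>i\<in>idx n k. \<forall>\<sigma>\<in>Aut n EG. \<forall>g\<in>carrier (Gam n A).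
          (\<Sum>p\<in>idx n k. T j p * utens n A p i \<sigma> g)
        = (\<Sum>q\<in>idx n l. utens n A j q \<sigma> g * T q i))}" using \<open>T \<in> Mor n EG A k l\<close> unfolding Mor_def .
      then have h: "(\<forall>j i. \<not> (j \<in> idx n l \<and> i \<in> idx n k) \<longrightarrow> T j i = 0)
     \<and> (\<forall>j\<in>idx n l. \<forall>i\<in>idx n k. \<forall>\<sigma>\<in>Aut n EG. \<forall>g\<in>carrier (Gam n A).
          (\<Sum>p\<in>idx n k. T j p * utens n A p i \<sigma> g)
        = (\<Sum>q\<in>idx n l. utens n A j q \<sigma> g * T q i))" by (rule CollectD)
      then show "\<forall>j i. \<not> (j \<in> idx n l \<and> i \<in> idx n k) \<longrightarrow> T j i = 0" by (rule conjunct1)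
      show "\<forall>j\<in>idx n l. \<forall>i\<in>idx n k. \<forall>\<sigma>\<in>Aut n EG. \<forall>g\<in>carrier (Gam n A).
          (if g = gm n A (map \<sigma> i) then T j (map \<sigma> i) else 0) = (if g = gm n A j then T (map (inv_into UNIV \<sigma>) j) i else 0)"
        using iffD1[OF eqv[of T] conjunct2[OF h]] .
    qed
    have S: "T j i \<noteq> 0 \<longrightarrow> gm n A i = gm n A j" if "j \<in> idx n l" "i \<in> idx n k" for j i
    proof -
      have "(if gm n A i = gm n A (map id i) then T j (map id i) else 0) =
            (if gm n A i = gm n A j then T (map (inv_into UNIV id) j) i else 0)"
        using C[rule_format, OF that aut_id gm_carrier[OF N idx_set[OF that(2)]]] by simp
      then show ?thesis by (cases "gm n A i = gm n A j") (simp_all add: inv_id)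
    qed
    have I: "T (map \<sigma> j) (map \<sigma> i) = T j i" if s: "\<sigma> \<in> Aut n EG" for \<sigma> j i
    proof (cases "j \<in> idx n l \<and> i \<in> idx n k")
      case False
      have "T j i = 0" using Z False by blast
      moreover have "T (map \<sigma> j) (map \<sigma> i) = 0"
        using Z False idx_map[OF s, of j l] idx_map[OF s, of i k] by blast
      ultimately show ?thesis by simp
    next
      case True
      have j': "map \<sigma> j \<in> idx n l" using True idx_map[OF s] by simp
      have c: "gm n A (map \<sigma> i) \<in> carrier (Gam n A)"
      proof -
        have "map \<sigma> i \<in> idx n k" using True idx_map[OF s] by simp
        then show ?thesis using gm_carrier[OF N idx_set] by blast
      qed
      have "T (map \<sigma> j) (map \<sigma> i) = (if gm n A (map \<sigma> i) = gm n A (map \<sigma> j) then T j i else 0)"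
        using C[rule_format, OF j' conjunct2[OF True] s c] inv_map1[OF aut_perm[OF s], of j] by simp
      moreover have "T j i \<noteq> 0 \<Longrightarrow> gm n A (map \<sigma> i) = gm n A (map \<sigma> j)"
        using S True gmaut[OF s, of i j] by blast
      ultimately show ?thesis by (cases "T j i = 0") auto
    qed
    show "T \<in> {T. PT n EG A k l T}" unfolding PT_def mem_Collect_eq using Z S I by blast
  next
    fix T assume "T \<in> {T. PT n EG A k l T}"
    then have Z: "\<forall>j i. \<not> (j \<in> idx n l \<and> i \<in> idx n k) \<longrightarrow> T j i = 0"
      and I: "\<forall>\<sigma>\<in>Aut n EG. \<forall>j i. T (map \<sigma> j) (map \<sigma> i) = T j i"
      and S: "\<forall>j\<in>idx n l. \<forall>i\<in>idx n k. T j i \<noteq> 0 \<longrightarrow> gm n A i = gm n A j"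
      by (auto simp: PT_def)
    have "(if g = gm n A (map \<sigma> i) then T j (map \<sigma> i) else 0) = (if g = gm n A j then T (map (inv_into UNIV \<sigma>) j) i else 0)"
      if j: "j \<in> idx n l" and i: "i \<in> idx n k" and s: "\<sigma> \<in> Aut n EG" for j i \<sigma> g
    proof -
      have p: "\<sigma> permutes {0..<n}" using s by (rule aut_perm)
      have v: "T j (map \<sigma> i) = T (map (inv_into UNIV \<sigma>) j) i"
      proof -
        have "T (map \<sigma> (map (inv_into UNIV \<sigma>) j)) (map \<sigma> i) = T (map (inv_into UNIV \<sigma>) j) i"
          using I s by blast
        then show ?thesis by (simp only: inv_map2[OF p])
      qed
      have j': "map (inv_into UNIV \<sigma>) j \<in> idx n l" using idx_map[OF aut_inv[OF s]] j by simp
      show ?thesis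
      proof (cases "T (map (inv_into UNIV \<sigma>) j) i = 0")
        case True then show ?thesis using v by simp
      next
        case False
        then have "gm n A i = gm n A (map (inv_into UNIV \<sigma>) j)" using S j' i by blast
        then have "gm n A (map \<sigma> i) = gm n A j"
          using gmaut[OF s i j'] inv_map2[OF p, of j] by simp
        then show ?thesis using v by simp
      qed
    qed
    then have "\<forall>j\<in>idx n l. \<forall>i\<in>idx n k. \<forall>\<sigma>\<in>Aut n EG. \<forall>g\<in>carrier (Gam n A).
          (\<Sum>p\<in>idx n k. T j p * utens n A p i \<sigma> g)
        = (\<Sum>q\<in>idx n l. utens n A j q \<sigma> g * T q i)" by (intro iffD2[OF eqv[of T]]) blast
    then show "T \<in> Mor n EG A k l" unfolding Mor_def using Z by blast
  qed
qed



definition ghom :: "nat \<Rightarrow> (nat \<times> nat) set \<Rightarrow> bgraph \<Rightarrow> (nat \<Rightarrow> nat) \<Rightarrow> bool" where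
  "ghom n EG K \<phi> \<longleftrightarrow> (\<forall>x\<in>bV K. \<phi> x < n) \<and> (\<forall>(x,y)\<in>bE K. (\<phi> x, \<phi> y) \<in> EG)"

definition Cat :: "nat \<Rightarrow> (nat \<times> nat) set \<Rightarrow> nat list set \<Rightarrow> bgraph set" where
  "Cat n EG A = {K. wf_bg K \<and> (\<forall>\<phi>. ghom n EG K \<phi> \<longrightarrow> gm n A (map \<phi> (bin K)) = gm n A (map \<phi> (bout K)))}"

lemma ghom_set: "wf_bg K \<Longrightarrow> ghom n EG K \<phi> \<Longrightarrow> set (map \<phi> (bin K)) \<subseteq> {0..<n} \<and> set (map \<phi> (bout K)) \<subseteq> {0..<n}"
  unfolding wf_bg_def ghom_def by auto

lemma wf_quot: "wf_bg K \<Longrightarrow> wf_bg (bg_quot K P)"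
  unfolding wf_bg_def bg_quot_def sym_def by (auto 0 3)

lemma ghom_quot: "ghom n EG (bg_quot K P) \<phi> \<Longrightarrow> ghom n EG K (\<phi> \<circ> qmap P)"
  unfolding ghom_def bg_quot_def by auto

lemma Cat_quot: "K \<in> Cat n EG A \<Longrightarrow> bg_quot K P \<in> Cat n EG A"
  unfolding Cat_def using wf_quot ghom_quot by (fastforce simp: bg_quot_def)

lemma Cat_inv: "K \<in> Cat n EG A \<Longrightarrow> involution K \<in> Cat n EG A"
  unfolding Cat_def involution_def wf_bg_def ghom_def by auto

lemma Cat_iso:
  assumes K: "K \<in> Cat n EG A" and w: "wf_bg K'" and iso: "bg_iso K K'"
  shows "K' \<in> Cat n EG A"
proof -
  obtain f where f: "bij_betw f (bV K) (bV K')"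
     "\<forall>x\<in>bV K. \<forall>y\<in>bV K. (x, y) \<in> bE K \<longleftrightarrow> (f x, f y) \<in> bE K'"
     "map f (bin K) = bin K'" "map f (bout K) = bout K'"
    using iso unfolding bg_iso_def by blast
  have wK: "wf_bg K" using K by (simp add: Cat_def)
  have "gm n A (map \<phi> (bin K')) = gm n A (map \<phi> (bout K'))" if h: "ghom n EG K' \<phi>" for \<phi>
  proof -
    have "ghom n EG K (\<phi> \<circ> f)"
      unfolding ghom_def
    proof (intro conjI ballI)
      fix x assume "x \<in> bV K" then show "(\<phi> \<circ> f) x < n"
        using h f(1) unfolding ghom_def bij_betw_def by auto
    next
      fix e assume e: "e \<in> bE K"
      obtain x y where xy: "e = (x,y)" by (cases e)
      have "x \<in> bV K" "y \<in> bV K" using wK e xy unfolding wf_bg_def by auto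
      then have "(f x, f y) \<in> bE K'" using f(2) e xy by blast
      then show "case e of (x, y) \<Rightarrow> ((\<phi> \<circ> f) x, (\<phi> \<circ> f) y) \<in> EG"
        using h xy unfolding ghom_def by auto
    qed
    then have "gm n A (map (\<phi> \<circ> f) (bin K)) = gm n A (map (\<phi> \<circ> f) (bout K))"
      using K by (simp add: Cat_def)
    then show ?thesis using f(3,4) by (metis map_map)
  qed
  then show ?thesis using w by (simp add: Cat_def)
qed

lemma wf_tensor: "wf_bg K \<Longrightarrow> wf_bg H \<Longrightarrow> wf_bg (tensor K H)"
  unfolding wf_bg_def tensor_def sym_def by (auto 0 3)

lemma ghom_tensor:
  assumes "ghom n EG (tensor K H) \<phi>"
  shows "ghom n EG K (\<lambda>x. \<phi> (2*x))" "ghom n EG H (\<lambda>x. \<phi> (2*x+1))"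
  using assms unfolding ghom_def tensor_def by auto

lemma Cat_tensor:
  assumes N: "normal A (Z2free n)" and K: "K \<in> Cat n EG A" and H: "H \<in> Cat n EG A"
  shows "tensor K H \<in> Cat n EG A"
proof -
  have wK: "wf_bg K" and wH: "wf_bg H" using K H by (auto simp: Cat_def)
  have "gm n A (map \<phi> (bin (tensor K H))) = gm n A (map \<phi> (bout (tensor K H)))"
    if h: "ghom n EG (tensor K H) \<phi>" for \<phi>
  proof -
    note h1 = ghom_tensor(1)[OF h] and h2 = ghom_tensor(2)[OF h]
    have e1: "gm n A (map (\<lambda>x. \<phi> (2*x)) (bin K)) = gm n A (map (\<lambda>x. \<phi> (2*x)) (bout K))"
      using K h1 by (simp add: Cat_def)
    have e2: "gm n A (map (\<lambda>x. \<phi> (2*x+1)) (bin H)) = gm n A (map (\<lambda>x. \<phi> (2*x+1)) (bout H))"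
      using H h2 by (simp add: Cat_def)
    have s1: "set (map (\<lambda>x. \<phi> (2*x)) (bin K)) \<subseteq> {0..<n}" "set (map (\<lambda>x. \<phi> (2*x)) (bout K)) \<subseteq> {0..<n}"
      using ghom_set[OF wK h1] by auto
    have s2: "set (map (\<lambda>x. \<phi> (2*x+1)) (bin H)) \<subseteq> {0..<n}" "set (map (\<lambda>x. \<phi> (2*x+1)) (bout H)) \<subseteq> {0..<n}"
      using ghom_set[OF wH h2] by auto
    have "map \<phi> (bin (tensor K H)) = map (\<lambda>x. \<phi> (2*x)) (bin K) @ map (\<lambda>x. \<phi> (2*x+1)) (bin H)"
         "map \<phi> (bout (tensor K H)) = map (\<lambda>x. \<phi> (2*x)) (bout K) @ map (\<lambda>x. \<phi> (2*x+1)) (bout H)"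
      by (simp_all add: tensor_def)
    then show ?thesis using gm_append[OF N s1(1) s2(1)] gm_append[OF N s1(2) s2(2)] e1 e2 by simp
  qed
  then show ?thesis using wf_tensor[OF wK wH] by (simp add: Cat_def)
qed

lemma qblock_eq:
  assumes E: "equiv X R" and a: "a \<in> X"
  shows "qblock (X // R) a = R `` {a}"
  unfolding qblock_def
proof (rule the_equality)
  show "R `` {a} \<in> X // R \<and> a \<in> R `` {a}" using quotientI[OF a] equiv_class_self[OF E a] by blast
next
  fix B assume B: "B \<in> X // R \<and> a \<in> B"
  then obtain y where y: "B = R `` {y}" "y \<in> X" by (blast elim: quotientE)
  then have "(y, a) \<in> R" using B by blast
  then show "B = R `` {a}" using y equiv_class_eq_iff[OF E] by blast
qed

lemma Cat_compose:
  assumes N: "normal A (Z2free n)" and K: "K \<in> Cat n EG A" and H: "H \<in> Cat n EG A"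
    and len: "length (bout K) = length (bin H)"
  shows "compose H K \<in> Cat n EG A"
proof -
  have wK: "wf_bg K" and wH: "wf_bg H" using K H by (auto simp: Cat_def)
  define D where "D = tensor K H"
  define S where "S = {(2 * (bout K ! i), 2 * (bin H ! i) + 1) | i. i < length (bout K)}"
  define R where "R = (S \<union> S\<inverse>)\<^sup>* \<inter> (bV D \<times> bV D)"
  define D' where "D' = D\<lparr> bin := map (\<lambda>x. 2*x) (bin K), bout := map (\<lambda>x. 2*x+1) (bout H) \<rparr>"
  define P where "P = bV D // R"
  have C: "compose H K = bg_quot D' P"
    unfolding compose_def D_def S_def R_def D'_def P_def Let_def by simp
  have wD: "wf_bg D" unfolding D_def by (rule wf_tensor[OF wK wH])
  have wD': "wf_bg D'" using wD wK wH unfolding D'_def wf_bg_def D_def tensor_def by auto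
  have symR: "sym ((S \<union> S\<inverse>)\<^sup>*)" by (rule sym_rtrancl[OF sym_Un_converse])
  have E: "equiv (bV D) R"
  proof (rule equivI)
    show "R \<subseteq> bV D \<times> bV D" unfolding R_def by blast
    show "refl_on (bV D) R" unfolding R_def refl_on_def by blast
    show "sym R" using symR unfolding R_def sym_def by blast
    show "trans R"
    proof (rule transI)
      fix x y z assume "(x,y) \<in> R" "(y,z) \<in> R"
      then show "(x,z) \<in> R" unfolding R_def by (blast intro: rtrancl_trans)
    qed
  qed
  have ident: "qmap P (2 * (bout K ! i)) = qmap P (2 * (bin H ! i) + 1)" if i: "i < length (bout K)" for i
  proof -
    have "bout K ! i \<in> bV K" using wK i nth_mem unfolding wf_bg_def by blast
    then have a: "2 * (bout K ! i) \<in> bV D" unfolding D_def tensor_def by simp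
    have "bin H ! i \<in> bV H" using wH i len nth_mem unfolding wf_bg_def by fastforce
    then have b: "2 * (bin H ! i) + 1 \<in> bV D" unfolding D_def tensor_def by simp
    have "(2 * (bout K ! i), 2 * (bin H ! i) + 1) \<in> S" using i unfolding S_def by blast
    then have "(2 * (bout K ! i), 2 * (bin H ! i) + 1) \<in> R" using a b unfolding R_def by blast
    then have "R `` {2 * (bout K ! i)} = R `` {2 * (bin H ! i) + 1}" using equiv_class_eq_iff[OF E] by blast
    then show ?thesis unfolding qmap_def P_def qblock_eq[OF E a] qblock_eq[OF E b] by simp
  qed
  have "gm n A (map \<phi> (bin (compose H K))) = gm n A (map \<phi> (bout (compose H K)))"
    if h: "ghom n EG (compose H K) \<phi>" for \<phi>
  proof -
    define \<psi> where "\<psi> = \<phi> \<circ> qmap P"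
    have hD: "ghom n EG D \<psi>" using ghom_quot[of n EG D' P \<phi>] h C unfolding \<psi>_def D'_def ghom_def by simp
    note h1 = ghom_tensor(1)[OF hD[unfolded D_def]] and h2 = ghom_tensor(2)[OF hD[unfolded D_def]]
    have e1: "gm n A (map (\<lambda>x. \<psi> (2*x)) (bin K)) = gm n A (map (\<lambda>x. \<psi> (2*x)) (bout K))"
      using K h1 by (simp add: Cat_def)
    have e2: "gm n A (map (\<lambda>x. \<psi> (2*x+1)) (bin H)) = gm n A (map (\<lambda>x. \<psi> (2*x+1)) (bout H))"
      using H h2 by (simp add: Cat_def)
    have mid: "map (\<lambda>x. \<psi> (2*x)) (bout K) = map (\<lambda>x. \<psi> (2*x+1)) (bin H)"
      by (rule nth_equalityI) (use len ident in \<open>simp_all add: \<psi>_def\<close>)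
    have "map \<phi> (bin (compose H K)) = map (\<lambda>x. \<psi> (2*x)) (bin K)"
         "map \<phi> (bout (compose H K)) = map (\<lambda>x. \<psi> (2*x+1)) (bout H)"
      unfolding C by (simp_all add: bg_quot_def D'_def \<psi>_def)
    then show ?thesis using e1 e2 mid by simp
  qed
  moreover have "wf_bg (compose H K)" unfolding C by (rule wf_quot[OF wD'])
  ultimately show ?thesis by (simp add: Cat_def)
qed

lemma Cat_basic:
  "N0 \<in> Cat n EG A" "Mid \<in> Cat n EG A" "Mpair \<in> Cat n EG A"
  unfolding Cat_def N0_def Mid_def Mpair_def wf_bg_def
  by (auto simp: gm_pair)

lemma Cat_gt:
  assumes N: "normal A (Z2free n)"
  shows "group_theoretical (Cat n EG A)"
  unfolding group_theoretical_def graph_category_def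
proof (intro conjI)
  show "\<forall>K\<in>Cat n EG A. wf_bg K" by (simp add: Cat_def)
  show "\<forall>K\<in>Cat n EG A. \<forall>K'. wf_bg K' \<and> bg_iso K K' \<longrightarrow> K' \<in> Cat n EG A"
    using Cat_iso by blast
  show "N0 \<in> Cat n EG A" "Mid \<in> Cat n EG A" "Mpair \<in> Cat n EG A" by (rule Cat_basic)+
  show "\<forall>K\<in>Cat n EG A. \<forall>H\<in>Cat n EG A. tensor K H \<in> Cat n EG A"
    using Cat_tensor[OF N] by blast
  show "\<forall>K\<in>Cat n EG A. \<forall>H\<in>Cat n EG A. length (bout K) = length (bin H) \<longrightarrow> compose H K \<in> Cat n EG A"
    using Cat_compose[OF N] by blast
  show "\<forall>K\<in>Cat n EG A. involution K \<in> Cat n EG A" using Cat_inv by blast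
  show "\<forall>K\<in>Cat n EG A. \<forall>P. partition_on (bV K) P \<longrightarrow> bg_quot K P \<in> Cat n EG A"
    using Cat_quot by blast
qed



definition Hs :: "nat \<Rightarrow> (nat \<times> nat) set \<Rightarrow> bgraph \<Rightarrow> nat list \<Rightarrow> nat list \<Rightarrow> (nat \<Rightarrow> nat) set" where
  "Hs n EG K j i = {\<phi> \<in> bV K \<rightarrow>\<^sub>E {0..<n}. inj_on \<phi> (bV K)
      \<and> (\<forall>(x,y)\<in>bE K. (\<phi> x, \<phi> y) \<in> EG)
      \<and> map \<phi> (bin K) = i \<and> map \<phi> (bout K) = j}"

lemma hatT_Hs: "hatT n EG K j i = of_nat (card (Hs n EG K j i))"
  by (simp add: hatT_def Hs_def)

lemma finite_Hs: "finite (Hs n EG K j i)" if "finite (bV K)"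
proof -
  have "finite (bV K \<rightarrow>\<^sub>E {0..<n})" using that by (simp add: finite_PiE)
  then show ?thesis unfolding Hs_def by (rule finite_subset[rotated]) blast
qed

lemma hatT_zero:
  assumes w: "wf_bg K" and "length (bin K) = k" "length (bout K) = l"
    and nz: "hatT n EG K j i \<noteq> 0"
  shows "j \<in> idx n l \<and> i \<in> idx n k"
proof -
  have "Hs n EG K j i \<noteq> {}" using nz by (auto simp: hatT_Hs)
  then obtain \<phi> where \<phi>: "\<phi> \<in> Hs n EG K j i" by blast
  then have "\<phi> \<in> bV K \<rightarrow>\<^sub>E {0..<n}" "map \<phi> (bin K) = i" "map \<phi> (bout K) = j" by (auto simp: Hs_def)
  then have "\<forall>x\<in>bV K. \<phi> x < n" by (auto simp: PiE_def Pi_def)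
  then show ?thesis using w assms(2,3) \<open>map \<phi> (bin K) = i\<close> \<open>map \<phi> (bout K) = j\<close>
    unfolding idx_def wf_bg_def by (auto simp: subset_eq)
qed

lemma hatT_supp:
  assumes K: "K \<in> Cat n EG A" and nz: "hatT n EG K j i \<noteq> 0"
  shows "gm n A i = gm n A j"
proof -
  have "Hs n EG K j i \<noteq> {}" using nz by (auto simp: hatT_Hs)
  then obtain \<phi> where \<phi>: "\<phi> \<in> Hs n EG K j i" by blast
  then have h: "ghom n EG K \<phi>" unfolding Hs_def ghom_def by (auto dest!: PiE_mem)
  have "map \<phi> (bin K) = i" "map \<phi> (bout K) = j" using \<phi> by (auto simp: Hs_def)
  then show ?thesis using K h by (auto simp: Cat_def)
qed

lemma Hs_le:
  assumes w: "wf_bg K" and s: "\<sigma> \<in> Aut n EG" and EG: "EG \<subseteq> {0..<n} \<times> {0..<n}"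
  shows "card (Hs n EG K j i) \<le> card (Hs n EG K (map \<sigma> j) (map \<sigma> i))"
proof -
  have p: "\<sigma> permutes {0..<n}" using s by (rule aut_perm)
  have injs: "inj \<sigma>" using permutes_inj[OF p] .
  define f where "f = (\<lambda>\<phi>. restrict (\<sigma> \<circ> \<phi>) (bV K))"
  have fin: "finite (bV K)" using w by (simp add: wf_bg_def)
  have "inj_on f (Hs n EG K j i)"
  proof (rule inj_onI)
    fix \<phi>1 \<phi>2 assume a: "\<phi>1 \<in> Hs n EG K j i" "\<phi>2 \<in> Hs n EG K j i" "f \<phi>1 = f \<phi>2"
    have e1: "\<phi>1 \<in> bV K \<rightarrow>\<^sub>E {0..<n}" "\<phi>2 \<in> bV K \<rightarrow>\<^sub>E {0..<n}" using a(1,2) by (simp_all add: Hs_def)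
    show "\<phi>1 = \<phi>2"
    proof
      fix x show "\<phi>1 x = \<phi>2 x"
      proof (cases "x \<in> bV K")
        case True
        have "f \<phi>1 x = f \<phi>2 x" using a(3) by simp
        then have "\<sigma> (\<phi>1 x) = \<sigma> (\<phi>2 x)" using True by (simp add: f_def)
        then show ?thesis using injs by (simp add: inj_eq)
      next
        case False
        then show ?thesis using PiE_arb[OF e1(1) False] PiE_arb[OF e1(2) False] by simp
      qed
    qed
  qed
  moreover have "f ` Hs n EG K j i \<subseteq> Hs n EG K (map \<sigma> j) (map \<sigma> i)"
  proof
    fix \<psi> assume "\<psi> \<in> f ` Hs n EG K j i"
    then obtain \<phi> where \<phi>: "\<phi> \<in> Hs n EG K j i" and \<psi>: "\<psi> = f \<phi>" by blast
    have \<phi>1: "\<phi> \<in> bV K \<rightarrow>\<^sub>E {0..<n}" and \<phi>2: "inj_on \<phi> (bV K)"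
      and \<phi>3: "\<forall>(x,y)\<in>bE K. (\<phi> x, \<phi> y) \<in> EG"
      and \<phi>4: "map \<phi> (bin K) = i" and \<phi>5: "map \<phi> (bout K) = j" using \<phi> by (simp_all add: Hs_def)
    have val: "\<psi> x = \<sigma> (\<phi> x)" if "x \<in> bV K" for x using that by (simp add: \<psi> f_def)
    have lt: "\<phi> x < n" if "x \<in> bV K" for x using PiE_mem[OF \<phi>1 that] by simp
    have "\<psi> \<in> bV K \<rightarrow>\<^sub>E {0..<n}" unfolding \<psi> f_def restrict_PiE_iff
      using lt aut_lt[OF s] by simp
    moreover have "inj_on \<psi> (bV K)"
    proof (rule inj_onI)
      fix x y assume "x \<in> bV K" "y \<in> bV K" "\<psi> x = \<psi> y"
      then have "\<sigma> (\<phi> x) = \<sigma> (\<phi> y)" using val by simp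
      then have "\<phi> x = \<phi> y" using injs by (simp add: inj_eq)
      then show "x = y" using \<phi>2 \<open>x \<in> bV K\<close> \<open>y \<in> bV K\<close> by (simp add: inj_on_def)
    qed
    moreover have "\<forall>(x,y)\<in>bE K. (\<psi> x, \<psi> y) \<in> EG"
    proof (intro ballI, clarify)
      fix x y assume xy: "(x,y) \<in> bE K"
      then have xy': "x \<in> bV K" "y \<in> bV K" using w by (auto simp: wf_bg_def)
      have "(\<phi> x, \<phi> y) \<in> EG" using \<phi>3 xy by blast
      then have "(\<sigma> (\<phi> x), \<sigma> (\<phi> y)) \<in> EG" by (rule aut_edge[OF EG s])
      then show "(\<psi> x, \<psi> y) \<in> EG" using val xy' by simp
    qed
    moreover have "map \<psi> (bin K) = map \<sigma> i"
    proof -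
      have "map \<psi> (bin K) = map (\<sigma> \<circ> \<phi>) (bin K)"
        by (rule map_cong[OF refl]) (use w val in \<open>auto simp: wf_bg_def\<close>)
      then show ?thesis unfolding \<phi>4[symmetric] by (simp only: map_map)
    qed
    moreover have "map \<psi> (bout K) = map \<sigma> j"
    proof -
      have "map \<psi> (bout K) = map (\<sigma> \<circ> \<phi>) (bout K)"
        by (rule map_cong[OF refl]) (use w val in \<open>auto simp: wf_bg_def\<close>)
      then show ?thesis unfolding \<phi>5[symmetric] by (simp only: map_map)
    qed
    ultimately show "\<psi> \<in> Hs n EG K (map \<sigma> j) (map \<sigma> i)" unfolding Hs_def by blast
  qed
  ultimately show ?thesis by (rule card_inj_on_le[OF _ _ finite_Hs[OF fin]])
qed

lemma hatT_inv:
  assumes w: "wf_bg K" and s: "\<sigma> \<in> Aut n EG" and EG: "EG \<subseteq> {0..<n} \<times> {0..<n}"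
  shows "hatT n EG K (map \<sigma> j) (map \<sigma> i) = hatT n EG K j i"
proof -
  have p: "\<sigma> permutes {0..<n}" using s by (rule aut_perm)
  have "card (Hs n EG K (map \<sigma> j) (map \<sigma> i)) \<le> card (Hs n EG K (map (inv_into UNIV \<sigma>) (map \<sigma> j)) (map (inv_into UNIV \<sigma>) (map \<sigma> i)))"
    by (rule Hs_le[OF w aut_inv[OF s] EG])
  then have "card (Hs n EG K (map \<sigma> j) (map \<sigma> i)) \<le> card (Hs n EG K j i)"
    by (simp only: inv_map1[OF p])
  moreover have "card (Hs n EG K j i) \<le> card (Hs n EG K (map \<sigma> j) (map \<sigma> i))"
    by (rule Hs_le[OF w s EG])
  ultimately show ?thesis by (simp add: hatT_Hs)
qed

lemma PT_hatT:
  assumes EG: "EG \<subseteq> {0..<n} \<times> {0..<n}" and K: "K \<in> Cat n EG A"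
    and "length (bin K) = k" "length (bout K) = l"
  shows "PT n EG A k l (hatT n EG K)"
proof -
  have w: "wf_bg K" using K by (simp add: Cat_def)
  show ?thesis unfolding PT_def
    using hatT_zero[OF w assms(3,4)] hatT_inv[OF w _ EG] hatT_supp[OF K] by blast
qed

lemma PT_span:
  assumes F: "finite F" and P: "\<forall>X\<in>F. PT n EG A k l X"
  shows "PT n EG A k l (\<lambda>j i. \<Sum>X\<in>F. c X * X j i)"
  unfolding PT_def
proof (intro conjI allI ballI impI)
  fix j i assume "\<not> (j \<in> idx n l \<and> i \<in> idx n k)"
  then show "(\<Sum>X\<in>F. c X * X j i) = 0" using P by (intro sum.neutral) (auto simp: PT_def)
next
  fix \<sigma> j i assume "\<sigma> \<in> Aut n EG"
  then show "(\<Sum>X\<in>F. c X * X (map \<sigma> j) (map \<sigma> i)) = (\<Sum>X\<in>F. c X * X j i)"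
    using P by (intro sum.cong refl) (auto simp: PT_def)
next
  fix j i assume ji: "j \<in> idx n l" "i \<in> idx n k" and nz: "(\<Sum>X\<in>F. c X * X j i) \<noteq> 0"
  then obtain X where "X \<in> F" "c X * X j i \<noteq> 0" by (meson sum.not_neutral_contains_not_neutral)
  then show "gm n A i = gm n A j" using P ji unfolding PT_def by auto
qed

lemma span_gen:
  assumes I: "finite I" and f: "\<forall>a\<in>I. f a \<in> S"
  shows "(\<lambda>j i. \<Sum>a\<in>I. d a * f a j i) \<in> lin_span S"
proof -
  define c where "c X = (\<Sum>a\<in>{a \<in> I. f a = X}. d a)" for X
  have "(\<lambda>j i. \<Sum>a\<in>I. d a * f a j i) = (\<lambda>j i. \<Sum>X\<in>f ` I. c X * X j i)"
  proof (intro ext)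
    fix j i
    have "(\<Sum>a\<in>I. d a * f a j i) = (\<Sum>X\<in>f ` I. \<Sum>a\<in>{a \<in> I. f a = X}. d a * f a j i)"
      by (rule sum.image_gen[OF I])
    also have "\<dots> = (\<Sum>X\<in>f ` I. c X * X j i)"
      unfolding c_def sum_distrib_right by (intro sum.cong refl) auto
    finally show "(\<Sum>a\<in>I. d a * f a j i) = (\<Sum>X\<in>f ` I. c X * X j i)" .
  qed
  moreover have "finite (f ` I)" "f ` I \<subseteq> S" using I f by auto
  ultimately show ?thesis unfolding lin_span_def by blast
qed



definition KG :: "nat \<Rightarrow> (nat \<times> nat) set \<Rightarrow> nat list \<Rightarrow> nat list \<Rightarrow> bgraph" where
  "KG n EG i j = \<lparr> bV = {0..<n}, bE = EG, bin = i, bout = j \<rparr>"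

lemma KG_Cat:
  assumes EG: "EG \<subseteq> {0..<n} \<times> {0..<n}" and sEG: "sym EG" and N: "normal A (Z2free n)"
    and E: "End_invariant n EG A"
    and i: "i \<in> idx n k" and j: "j \<in> idx n l" and eq: "gm n A i = gm n A j"
  shows "KG n EG i j \<in> Cat n EG A"
proof -
  have "wf_bg (KG n EG i j)" using EG sEG i j unfolding wf_bg_def KG_def idx_def by auto
  moreover have "gm n A (map \<phi> i) = gm n A (map \<phi> j)" if h: "ghom n EG (KG n EG i j) \<phi>" for \<phi>
  proof -
    have "\<forall>x<n. \<phi> x < n" "\<forall>(x,y)\<in>EG. (\<phi> x, \<phi> y) \<in> EG" using h by (auto simp: ghom_def KG_def)
    then show ?thesis using gm_map[OF N E _ _ idx_set[OF i] idx_set[OF j] eq] by blast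
  qed
  ultimately show ?thesis by (simp add: Cat_def KG_def)
qed

lemma Hs_KG:
  assumes EG: "EG \<subseteq> {0..<n} \<times> {0..<n}" and i: "i \<in> idx n k" and j: "j \<in> idx n l"
  shows "Hs n EG (KG n EG i j) j' i' = (\<lambda>\<sigma>. restrict \<sigma> {0..<n}) ` {\<sigma> \<in> Aut n EG. map \<sigma> i = i' \<and> map \<sigma> j = j'}"
proof (intro equalityI subsetI)
  fix \<phi> assume "\<phi> \<in> Hs n EG (KG n EG i j) j' i'"
  then have \<phi>1: "\<phi> \<in> {0..<n} \<rightarrow>\<^sub>E {0..<n}" and \<phi>2: "inj_on \<phi> {0..<n}"
    and \<phi>3: "\<forall>(x,y)\<in>EG. (\<phi> x, \<phi> y) \<in> EG" and \<phi>4: "map \<phi> i = i'" and \<phi>5: "map \<phi> j = j'"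
    by (simp_all add: Hs_def KG_def)
  define \<sigma> where "\<sigma> x = (if x < n then \<phi> x else x)" for x
  have img: "\<phi> ` {0..<n} \<subseteq> {0..<n}" using \<phi>1 by (auto simp: PiE_def Pi_def)
  have surj: "\<phi> ` {0..<n} = {0..<n}" using endo_inj_surj[OF _ img \<phi>2] by simp
  have bij: "bij_betw \<phi> {0..<n} {0..<n}" using \<phi>2 surj by (simp add: bij_betw_def)
  have bs: "bij_betw \<sigma> {0..<n} {0..<n}"
    using bij by (rule bij_betw_cong[THEN iffD1, rotated]) (simp add: \<sigma>_def)
  have perm: "\<sigma> permutes {0..<n}" by (rule bij_imp_permutes[OF bs]) (simp add: \<sigma>_def)
  define g where "g = (\<lambda>(x,y). (\<phi> x, \<phi> y))"
  have gimg: "g ` EG \<subseteq> EG" using \<phi>3 by (auto simp: g_def)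
  have ginj: "inj_on g EG"
  proof (rule inj_onI)
    fix e1 e2 assume "e1 \<in> EG" "e2 \<in> EG" "g e1 = g e2"
    then show "e1 = e2" using \<phi>2 EG unfolding g_def inj_on_def by (auto split: prod.splits)
  qed
  have finEG: "finite EG" using EG by (rule finite_subset) simp
  have gsurj: "g ` EG = EG" by (rule endo_inj_surj[OF finEG gimg ginj])
  have edge: "(x,y) \<in> EG \<longleftrightarrow> (\<sigma> x, \<sigma> y) \<in> EG" if "x < n" "y < n" for x y
  proof
    assume "(x,y) \<in> EG" then show "(\<sigma> x, \<sigma> y) \<in> EG" using \<phi>3 that by (auto simp: \<sigma>_def)
  next
    assume "(\<sigma> x, \<sigma> y) \<in> EG"
    then have "(\<phi> x, \<phi> y) \<in> g ` EG" using gsurj that by (simp add: \<sigma>_def)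
    then obtain a b where ab: "(a,b) \<in> EG" "\<phi> x = \<phi> a" "\<phi> y = \<phi> b" unfolding g_def by auto
    then have "a < n" "b < n" using EG by auto
    then have "a = x" "b = y" using ab \<phi>2 that unfolding inj_on_def by auto
    then show "(x,y) \<in> EG" using ab by simp
  qed
  have sA: "\<sigma> \<in> Aut n EG" using perm edge by (simp add: Aut_def)
  have "restrict \<sigma> {0..<n} = \<phi>"
  proof
    fix x show "restrict \<sigma> {0..<n} x = \<phi> x"
      using PiE_arb[OF \<phi>1, of x] by (simp add: \<sigma>_def)
  qed
  moreover have "map \<sigma> i = i'" "map \<sigma> j = j'"
    using \<phi>4 \<phi>5 idx_set[OF i] idx_set[OF j] by (auto simp: \<sigma>_def subset_eq)
  ultimately show "\<phi> \<in> (\<lambda>\<sigma>. restrict \<sigma> {0..<n}) ` {\<sigma> \<in> Aut n EG. map \<sigma> i = i' \<and> map \<sigma> j = j'}"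
    using sA by blast
next
  fix \<phi> assume "\<phi> \<in> (\<lambda>\<sigma>. restrict \<sigma> {0..<n}) ` {\<sigma> \<in> Aut n EG. map \<sigma> i = i' \<and> map \<sigma> j = j'}"
  then obtain \<sigma> where s: "\<sigma> \<in> Aut n EG" "map \<sigma> i = i'" "map \<sigma> j = j'" and \<phi>: "\<phi> = restrict \<sigma> {0..<n}"
    by blast
  have p: "\<sigma> permutes {0..<n}" using s(1) by (rule aut_perm)
  have "\<phi> \<in> {0..<n} \<rightarrow>\<^sub>E {0..<n}" unfolding \<phi> restrict_PiE_iff using aut_lt[OF s(1)] by simp
  moreover have "inj_on \<phi> {0..<n}"
  proof (rule inj_onI)
    fix x y assume xy: "x \<in> {0..<n}" "y \<in> {0..<n}" "\<phi> x = \<phi> y"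
    then have "\<sigma> x = \<sigma> y" unfolding \<phi> by simp
    then show "x = y" using permutes_inj[OF p] by (simp add: inj_eq)
  qed
  moreover have "\<forall>(x,y)\<in>EG. (\<phi> x, \<phi> y) \<in> EG" unfolding \<phi> using EG aut_edge[OF EG s(1)] by auto
  moreover have "map \<phi> i = i'" "map \<phi> j = j'"
    using s(2,3) idx_set[OF i] idx_set[OF j] unfolding \<phi> by (auto simp: subset_eq)
  ultimately show "\<phi> \<in> Hs n EG (KG n EG i j) j' i'" by (simp add: Hs_def KG_def)
qed

lemma finite_Aut: "finite (Aut n EG)"
proof -
  have "Aut n EG \<subseteq> {p. p permutes {0..<n}}" by (auto simp: Aut_def)
  moreover have "finite {p. p permutes {0..<n}}" by (rule finite_permutations) simp
  ultimately show ?thesis by (rule finite_subset)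
qed

lemma hatT_KG:
  assumes EG: "EG \<subseteq> {0..<n} \<times> {0..<n}" and i: "i \<in> idx n k" and j: "j \<in> idx n l"
  shows "hatT n EG (KG n EG i j) j' i' = (\<Sum>\<sigma>\<in>Aut n EG. if map \<sigma> i = i' \<and> map \<sigma> j = j' then 1 else 0)"
proof -
  have inj: "inj_on (\<lambda>\<sigma>. restrict \<sigma> {0..<n}) (Aut n EG)"
  proof (rule inj_onI)
    fix \<sigma> \<tau> assume a: "\<sigma> \<in> Aut n EG" "\<tau> \<in> Aut n EG" "restrict \<sigma> {0..<n} = restrict \<tau> {0..<n}"
    show "\<sigma> = \<tau>"
    proof
      fix x show "\<sigma> x = \<tau> x"
      proof (cases "x < n")
        case True then show ?thesis using fun_cong[OF a(3), of x] by simp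
      next
        case False then show ?thesis
          using permutes_not_in[OF aut_perm[OF a(1)]] permutes_not_in[OF aut_perm[OF a(2)]] by simp
      qed
    qed
  qed
  have "card (Hs n EG (KG n EG i j) j' i') = card {\<sigma> \<in> Aut n EG. map \<sigma> i = i' \<and> map \<sigma> j = j'}"
    unfolding Hs_KG[OF EG i j] by (rule card_image) (rule inj_on_subset[OF inj], blast)
  then show ?thesis
    by (simp add: hatT_Hs sum.inter_filter[OF finite_Aut, symmetric])
qed



lemma inner_sum:
  assumes PT: "PT n EG A k l T" and s: "\<sigma> \<in> Aut n EG"
  shows "(\<Sum>x\<in>{(j,i). j \<in> idx n l \<and> i \<in> idx n k \<and> gm n A i = gm n A j}.
           if map \<sigma> (snd x) = i' \<and> map \<sigma> (fst x) = j' then T (fst x) (snd x) else 0) = T j' i'"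
    (is "(\<Sum>x\<in>?I. ?f x) = _")
proof -
  have Z: "\<And>j i. \<not> (j \<in> idx n l \<and> i \<in> idx n k) \<Longrightarrow> T j i = 0"
    and I: "\<And>\<sigma> j i. \<sigma> \<in> Aut n EG \<Longrightarrow> T (map \<sigma> j) (map \<sigma> i) = T j i"
    and S: "\<And>j i. j \<in> idx n l \<Longrightarrow> i \<in> idx n k \<Longrightarrow> T j i \<noteq> 0 \<Longrightarrow> gm n A i = gm n A j"
    using PT unfolding PT_def by blast+
  have p: "\<sigma> permutes {0..<n}" using s by (rule aut_perm)
  have finI: "finite ?I"
    by (rule finite_subset[of _ "idx n l \<times> idx n k"]) (auto simp: finite_idx)
  show ?thesis
  proof (cases "j' \<in> idx n l \<and> i' \<in> idx n k")
    case True
    define x0 where "x0 = (map (inv_into UNIV \<sigma>) j', map (inv_into UNIV \<sigma>) i')"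
    have x0i: "fst x0 \<in> idx n l" "snd x0 \<in> idx n k"
      using True idx_map[OF aut_inv[OF s]] unfolding x0_def by auto
    have T0: "T (fst x0) (snd x0) = T j' i'"
      using I[OF s, of "fst x0" "snd x0"] inv_map2[OF p] unfolding x0_def by simp
    have "(\<Sum>x\<in>?I. ?f x) = (\<Sum>x\<in>?I. if x0 = x then T (fst x) (snd x) else 0)"
    proof (rule sum.cong[OF refl])
      fix x assume "x \<in> ?I"
      have "(map \<sigma> (snd x) = i' \<and> map \<sigma> (fst x) = j') \<longleftrightarrow> x0 = x"
        unfolding x0_def using inv_map1[OF p] inv_map2[OF p] by (cases x) auto
      then show "?f x = (if x0 = x then T (fst x) (snd x) else 0)" by simp
    qed
    also have "\<dots> = (if x0 \<in> ?I then T (fst x0) (snd x0) else 0)"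
      by (rule sum.delta'[OF finI])
    also have "\<dots> = T j' i'"
    proof (cases "x0 \<in> ?I")
      case True then show ?thesis using T0 by simp
    next
      case False
      then have "gm n A (snd x0) \<noteq> gm n A (fst x0)" using x0i by (cases x0) auto
      then have "T (fst x0) (snd x0) = 0" using S x0i by blast
      then show ?thesis using T0 False by simp
    qed
    finally show ?thesis .
  next
    case False
    have "T j' i' = 0" using Z False by blast
    moreover have "?f x = 0" if "x \<in> ?I" for x
    proof -
      have "fst x \<in> idx n l" "snd x \<in> idx n k" using that by auto
      then have "map \<sigma> (fst x) \<in> idx n l" "map \<sigma> (snd x) \<in> idx n k" using idx_map[OF s] by auto
      then show ?thesis using False by auto
    qed
    ultimately show ?thesis by simp
  qed
qed

lemma Mor_sub:
  assumes EG: "EG \<subseteq> {0..<n} \<times> {0..<n}" and sEG: "sym EG" and N: "normal A (Z2free n)"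
    and E: "End_invariant n EG A" and PT: "PT n EG A k l T"
  shows "T \<in> CG n EG (Cat n EG A) k l"
proof -
  define I where "I = {(j,i). j \<in> idx n l \<and> i \<in> idx n k \<and> gm n A i = gm n A j}"
  define Nn where "Nn = (of_nat (card (Aut n EG)) :: complex)"
  have finI: "finite I" unfolding I_def
    by (rule finite_subset[of _ "idx n l \<times> idx n k"]) (auto simp: finite_idx)
  have "Aut n EG \<noteq> {}" using aut_id by blast
  then have "card (Aut n EG) \<noteq> 0" by (simp add: card_eq_0_iff finite_Aut)
  then have Npos: "Nn \<noteq> 0" by (simp add: Nn_def)
  have mem: "\<forall>x\<in>I. hatT n EG (KG n EG (snd x) (fst x)) \<in>
      {hatT n EG K | K. K \<in> Cat n EG A \<and> length (bin K) = k \<and> length (bout K) = l}"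
  proof
    fix x assume x: "x \<in> I"
    then have "fst x \<in> idx n l" "snd x \<in> idx n k" "gm n A (snd x) = gm n A (fst x)"
      unfolding I_def by auto
    then have "KG n EG (snd x) (fst x) \<in> Cat n EG A \<and> length (bin (KG n EG (snd x) (fst x))) = k
        \<and> length (bout (KG n EG (snd x) (fst x))) = l"
      using KG_Cat[OF EG sEG N E] by (auto simp: KG_def idx_def)
    then show "hatT n EG (KG n EG (snd x) (fst x)) \<in>
      {hatT n EG K | K. K \<in> Cat n EG A \<and> length (bin K) = k \<and> length (bout K) = l}" by blast
  qed
  have eq: "T = (\<lambda>j' i'. \<Sum>x\<in>I. (T (fst x) (snd x) / Nn) * hatT n EG (KG n EG (snd x) (fst x)) j' i')"
  proof (intro ext)
    fix j' i'
    have "(\<Sum>x\<in>I. (T (fst x) (snd x) / Nn) * hatT n EG (KG n EG (snd x) (fst x)) j' i')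
        = (\<Sum>x\<in>I. \<Sum>\<sigma>\<in>Aut n EG. if map \<sigma> (snd x) = i' \<and> map \<sigma> (fst x) = j' then T (fst x) (snd x) / Nn else 0)"
    proof (rule sum.cong[OF refl])
      fix x assume x: "x \<in> I"
      then have "fst x \<in> idx n l" "snd x \<in> idx n k" unfolding I_def by auto
      then show "(T (fst x) (snd x) / Nn) * hatT n EG (KG n EG (snd x) (fst x)) j' i'
          = (\<Sum>\<sigma>\<in>Aut n EG. if map \<sigma> (snd x) = i' \<and> map \<sigma> (fst x) = j' then T (fst x) (snd x) / Nn else 0)"
        by (simp add: hatT_KG[OF EG] sum_distrib_left if_distrib cong: if_cong)
    qed
    also have "\<dots> = (\<Sum>\<sigma>\<in>Aut n EG. \<Sum>x\<in>I. if map \<sigma> (snd x) = i' \<and> map \<sigma> (fst x) = j' then T (fst x) (snd x) / Nn else 0)"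
      by (rule sum.swap)
    also have "\<dots> = (\<Sum>\<sigma>\<in>Aut n EG. T j' i' / Nn)"
    proof (rule sum.cong[OF refl])
      fix \<sigma> assume s: "\<sigma> \<in> Aut n EG"
      have "(\<Sum>x\<in>I. if map \<sigma> (snd x) = i' \<and> map \<sigma> (fst x) = j' then T (fst x) (snd x) / Nn else 0)
          = (\<Sum>x\<in>I. (if map \<sigma> (snd x) = i' \<and> map \<sigma> (fst x) = j' then T (fst x) (snd x) else 0) / Nn)"
        by (rule sum.cong[OF refl]) simp
      also have "\<dots> = (\<Sum>x\<in>I. if map \<sigma> (snd x) = i' \<and> map \<sigma> (fst x) = j' then T (fst x) (snd x) else 0) / Nn"
        by (rule sum_divide_distrib[symmetric])
      also have "\<dots> = T j' i' / Nn" unfolding I_def by (simp only: inner_sum[OF PT s])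
      finally show "(\<Sum>x\<in>I. if map \<sigma> (snd x) = i' \<and> map \<sigma> (fst x) = j' then T (fst x) (snd x) / Nn else 0) = T j' i' / Nn" .
    qed
    also have "\<dots> = T j' i'" using Npos by (simp add: Nn_def)
    finally show "T j' i' = (\<Sum>x\<in>I. (T (fst x) (snd x) / Nn) * hatT n EG (KG n EG (snd x) (fst x)) j' i')" by simp
  qed
  show ?thesis unfolding CG_def
    by (subst eq) (rule span_gen[OF finI mem])
qed

theorem proposition5p5:
  fixes n :: nat and EG :: "(nat \<times> nat) set" and A :: "nat list set"
  assumes "EG \<subseteq> {0..<n} \<times> {0..<n}" and "sym EG"
    and "normal A (Z2free n)"
    and "End_invariant n EG A"
  shows "\<exists>C. group_theoretical C \<and> (\<forall>k l. CG n EG C k l = Mor n EG A k l)"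
proof (intro exI conjI allI)
  show "group_theoretical (Cat n EG A)" by (rule Cat_gt[OF assms(3)])
  fix k l
  show "CG n EG (Cat n EG A) k l = Mor n EG A k l"
  proof (intro equalityI subsetI)
    fix T assume "T \<in> CG n EG (Cat n EG A) k l"
    then obtain F c where F: "finite F"
      "F \<subseteq> {hatT n EG K | K. K \<in> Cat n EG A \<and> length (bin K) = k \<and> length (bout K) = l}"
      and T: "T = (\<lambda>j i. \<Sum>X\<in>F. c X * X j i)"
      unfolding CG_def lin_span_def by blast
    have "\<forall>X\<in>F. PT n EG A k l X" using F(2) PT_hatT[OF assms(1)] by blast
    then have "PT n EG A k l T" unfolding T by (rule PT_span[OF F(1)])
    then show "T \<in> Mor n EG A k l" using Mor_char[OF assms(1,3,4)] by blast
  next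
    fix T assume "T \<in> Mor n EG A k l"
    then have "PT n EG A k l T" using Mor_char[OF assms(1,3,4)] by blast
    then show "T \<in> CG n EG (Cat n EG A) k l" by (rule Mor_sub[OF assms])
  qed
qed


end
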